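(* Let $V\in\mathcal C^\infty(\mathbb R^d,\mathbb R)$ and suppose there exist $C>0$ and a compact set $K\subset\mathbb R^d$ such that for all $x\in\mathbb R^d\setminus K$, $$V(x)\ge -C,\qquad |\nabla V(x)|\ge \tfrac1C,\qquad |\Delta V(x)|\le C|\nabla V(x)|^2 .$$ Then there exists $b\in\mathbb R$ such that for all $x\in\mathbb R^d$, $V(x)\ge \frac1C|x|+b$, with $C$ the constant above. *)

theory Defs
  imports "HOL-Analysis.Analysis"
begin

definition partial_deriv :: "(real^'n \<Rightarrow> real) \<Rightarrow> 'n \<Rightarrow> real^'n \<Rightarrow> real" where
  "partial_deriv f i x = frechet_derivative f (at x) (axis i 1)"

text \<open>C-infinity: f lies in a family of everywhere (Frechet) differentiable functions
  that is closed under taking partial derivatives, i.e. all partial derivatives of all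
  orders exist and are differentiable (hence continuous).\<close>
definition smooth :: "(real^'n \<Rightarrow> real) \<Rightarrow> bool" where
  "smooth f \<longleftrightarrow> (\<exists>F. f \<in> F \<and>
      (\<forall>g\<in>F. (\<forall>x. g differentiable (at x)) \<and> (\<forall>i. partial_deriv g i \<in> F)))"

definition grad :: "(real^'n \<Rightarrow> real) \<Rightarrow> real^'n \<Rightarrow> real^'n" where
  "grad f x = (\<chi> i. partial_deriv f i x)"

definition laplacian :: "(real^'n \<Rightarrow> real) \<Rightarrow> real^'n \<Rightarrow> real" where
  "laplacian f x = (\<Sum>i\<in>UNIV. partial_deriv (partial_deriv f i) i x)"

end

theory Submission
  imports Defs
begin

lemma lin_grad:
  fixes D :: "real^'d \<Rightarrow> real"
  assumes "linear D"
  shows "D v = (\<chi> i. D (axis i 1)) \<bullet> v"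
proof -
  have "v = (\<Sum>i\<in>UNIV. v$i *\<^sub>R axis i 1)"
    using basis_expansion[of v] by (simp add: scalar_mult_eq_scaleR)
  then have "D v = D (\<Sum>i\<in>UNIV. v$i *\<^sub>R axis i 1)" by simp
  also have "\<dots> = (\<Sum>i\<in>UNIV. D (v$i *\<^sub>R axis i 1))" using assms by (simp add: linear_sum)
  also have "\<dots> = (\<Sum>i\<in>UNIV. v$i * D (axis i 1))" using assms by (simp add: linear_scale)
  finally have "D v = (\<Sum>i\<in>UNIV. v$i * D (axis i 1))" .
  also have "\<dots> = (\<chi> i. D (axis i 1)) \<bullet> v"
    by (simp add: inner_vec_def mult.commute)
  finally show ?thesis .
qed

lemma deriv_line:
  fixes V :: "real^'d \<Rightarrow> real"
  assumes "V differentiable (at y)"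
  shows "((\<lambda>t. V (y - t *\<^sub>R grad V y)) has_real_derivative -(grad V y \<bullet> grad V y)) (at 0)"
proof -
  let ?D = "frechet_derivative V (at y)"
  have hd: "(V has_derivative ?D) (at y)" using assms frechet_derivative_works by blast
  have lin: "linear ?D" using hd has_derivative_linear by blast
  have g: "grad V y = (\<chi> i. ?D (axis i 1))" unfolding grad_def partial_deriv_def by simp
  have l: "((\<lambda>t::real. y - t *\<^sub>R grad V y) has_derivative (\<lambda>t. - (t *\<^sub>R grad V y))) (at 0)"
    by (auto intro!: derivative_eq_intros)
  have "((\<lambda>t. V (y - t *\<^sub>R grad V y)) has_derivative (\<lambda>t. ?D (- (t *\<^sub>R grad V y)))) (at 0)"
    using has_derivative_compose[OF l] hd by simp
  moreover have "(\<lambda>t. ?D (- (t *\<^sub>R grad V y))) = (\<lambda>t. (-(grad V y \<bullet> grad V y)) * t)"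
  proof
    fix t
    have "?D (- (t *\<^sub>R grad V y)) = - t * ?D (grad V y)"
      using lin by (simp add: linear_neg linear_scale)
    also have "\<dots> = - t * (grad V y \<bullet> grad V y)"
      using lin_grad[OF lin, of "grad V y"] g by simp
    finally show "?D (- (t *\<^sub>R grad V y)) = (-(grad V y \<bullet> grad V y)) * t" by simp
  qed
  ultimately have "((\<lambda>t. V (y - t *\<^sub>R grad V y)) has_derivative (\<lambda>t. (-(grad V y \<bullet> grad V y)) * t)) (at 0)"
    by metis
  moreover have "(\<lambda>t. (-(grad V y \<bullet> grad V y)) * t) = (*) (-(grad V y \<bullet> grad V y))" by auto
  ultimately show ?thesis unfolding has_field_derivative_def by simp
qed

lemma key:
  fixes V :: "real^'d \<Rightarrow> real"
  assumes diff: "\<forall>x. V differentiable (at x)"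
    and low: "\<forall>y. L \<le> V y"
    and Kp: "\<forall>y. y \<notin> K \<longrightarrow> norm (grad V y) \<ge> 1/C"
    and C: "0 < C" "C < C'"
  shows "\<exists>y0\<in>K. V y0 + norm (y0 - x)/C' \<le> V x"
proof -
  have C'0: "C' > 0" using C by simp
  define r where "r = C' * (V x - L) + 1"
  define h where "h = (\<lambda>y. V y + norm (y - x)/C')"
  have contV: "continuous_on UNIV V"
    using diff differentiable_imp_continuous_within continuous_at_imp_continuous_on by blast
  have "continuous_on (cball x r) h" unfolding h_def
    using C'0 by (intro continuous_intros continuous_on_subset[OF contV]) auto
  moreover have "cball x r \<noteq> {}" using low r_def C'0 by (simp add: less_le_not_le) 
  ultimately obtain y0 where y0: "y0 \<in> cball x r" "\<forall>y\<in>cball x r. h y0 \<le> h y"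
    using continuous_attains_inf[of "cball x r" h] by auto
  have "h y0 \<le> h x" using y0 low r_def C'0 by (simp add: less_le_not_le)
  then have hx: "V y0 + norm (y0 - x)/C' \<le> V x" by (simp add: h_def)
  then have "norm (y0 - x)/C' \<le> V x - L" using low[rule_format, of y0] by linarith
  then have "norm (y0 - x) \<le> C' * (V x - L)" using C'0 by (simp add: field_simps)
  then have dy0: "dist x y0 < r" unfolding r_def by (simp add: dist_norm norm_minus_commute)
  have "y0 \<in> K"
  proof (rule ccontr)
    assume nK: "y0 \<notin> K"
    define g where "g = grad V y0"
    have ng: "norm g \<ge> 1/C" using Kp nK g_def by auto
    have "1/C' < 1/C" using C by (simp add: frac_less2)
    then have ng2: "norm g > 1/C'" using ng by linarith
    define phi where "phi = (\<lambda>t. V (y0 - t *\<^sub>R g) + t * norm g / C')"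
    have "(phi has_real_derivative (-(g \<bullet> g) + norm g / C')) (at 0)"
    proof -
      have a: "((\<lambda>t. V (y0 - t *\<^sub>R g)) has_real_derivative -(g \<bullet> g)) (at 0)"
        unfolding g_def by (rule deriv_line[OF diff[rule_format]])
      have b: "((\<lambda>t. t * norm g / C') has_real_derivative norm g / C') (at 0)"
        using C'0 by (auto intro!: derivative_eq_intros)
      show ?thesis unfolding phi_def using DERIV_add[OF a b] by simp
    qed
    moreover have "-(g \<bullet> g) + norm g / C' < 0"
    proof -
      have "g \<bullet> g = norm g * norm g" by (simp add: power2_eq_square[symmetric] power2_norm_eq_inner)
      moreover have "norm g / C' < norm g * norm g"
      proof -
        have "norm g / C' = norm g * (1/C')" by simp
        also have "\<dots> < norm g * norm g" using ng2 C'0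
          by (intro mult_strict_left_mono) (auto intro: le_less_trans[OF _ ng2])
        finally show ?thesis .
      qed
      ultimately show ?thesis by linarith
    qed
    ultimately obtain d where d: "d > 0" "\<forall>t>0. t < d \<longrightarrow> phi (0 + t) < phi 0"
      using DERIV_neg_dec_right by blast
    define e where "e = r - dist x y0"
    have e0: "e > 0" using dy0 e_def by simp
    define t where "t = min (d/2) (e / (2 * (norm g + 1)))"
    have "2 * (norm g + 1) > 0" by (simp add: add_nonneg_pos)
    then have t0: "t > 0" using d e0 t_def by simp
    have td: "t < d" using d t_def by simp
    have "t * norm g \<le> e / (2 * (norm g + 1)) * norm g" unfolding t_def
      by (intro mult_right_mono) auto
    also have "\<dots> = e * (norm g / (2 * (norm g + 1)))" by simp
    also have "\<dots> < e * 1" using e0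
      by (intro mult_strict_left_mono) (auto simp: divide_less_eq add_nonneg_pos)
    also have "\<dots> = e" by simp
    finally have tg: "t * norm g < e" .
    define y where "y = y0 - t *\<^sub>R g"
    have "dist x y \<le> dist x y0 + dist y0 y" by (rule dist_triangle)
    also have "dist y0 y = t * norm g" using t0 by (simp add: y_def dist_norm)
    finally have "dist x y < r" using tg e_def by linarith
    then have "h y0 \<le> h y" using y0 by auto
    also have "h y \<le> V y + (norm (y0 - x) + t * norm g)/C'"
    proof -
      have "norm (y - x) \<le> norm (y0 - x) + norm (y - y0)"
        using norm_triangle_ineq[of "y - y0" "y0 - x"] by (simp add: add.commute)
      also have "norm (y - y0) = t * norm g" using t0 by (simp add: y_def)
      finally show ?thesis unfolding h_def using C'0 by (simp add: divide_right_mono)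
    qed
    also have "\<dots> = phi t + norm (y0 - x)/C'" unfolding phi_def y_def by (simp add: add_divide_distrib)
    also have "\<dots> < phi 0 + norm (y0 - x)/C'" using d(2) t0 td by simp
    also have "\<dots> = h y0" unfolding phi_def h_def by simp
    finally show False by simp
  qed
  then show ?thesis using hx by blast
qed

theorem lemma1:
  fixes V :: "real^'d \<Rightarrow> real" and C :: real and K :: "(real^'d) set"
  assumes "smooth V"
    and "C > 0"
    and "compact K"
    and "\<forall>x. x \<notin> K \<longrightarrow>
           V x \<ge> - C \<and> norm (grad V x) \<ge> 1 / C \<and>
           \<bar>laplacian V x\<bar> \<le> C * (norm (grad V x))^2"
  shows "\<exists>b::real. \<forall>x. V x \<ge> (1 / C) * norm x + b"
proof -
  have diff: "\<forall>x. V differentiable (at x)" using assms(1) unfolding smooth_def by blast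
  have contV: "continuous_on UNIV V"
    using diff differentiable_imp_continuous_within continuous_at_imp_continuous_on by blast
  have "compact (V ` K)" using compact_continuous_image continuous_on_subset[OF contV] assms(3) by blast
  then obtain B where B: "\<forall>y\<in>K. \<bar>V y\<bar> \<le> B"
    using compact_imp_bounded bounded_real by (metis image_eqI)
  obtain R where R: "\<forall>y\<in>K. norm y \<le> R"
    using compact_imp_bounded[OF assms(3)] bounded_iff by blast
  define L where "L = min (- C) (- B)"
  have low: "\<forall>y. L \<le> V y"
  proof
    fix y show "L \<le> V y"
    proof (cases "y \<in> K")
      case True then show ?thesis using B L_def by force
    next
      case False then show ?thesis using assms(4) L_def by force
    qed
  qed
  have Kp: "\<forall>y. y \<notin> K \<longrightarrow> norm (grad V y) \<ge> 1/C" using assms(4) by blast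
  show ?thesis
  proof (intro exI allI)
    fix x
    define A where "A = V x - L"
    have A0: "A \<ge> 0" using low A_def by simp
    have main: "norm x - R \<le> A * C"
    proof (rule field_le_epsilon)
      fix e :: real assume e: "e > 0"
      define eps where "eps = e / (A + 1)"
      have eps0: "eps > 0" using e A0 eps_def by simp
      obtain y0 where y0: "y0 \<in> K" "V y0 + norm (y0 - x)/(C + eps) \<le> V x"
        using key[OF diff low Kp assms(2), of "C + eps" x] eps0 by auto
      have "norm x - R \<le> norm (y0 - x)" using R y0(1)
        by (smt (verit) norm_minus_commute norm_triangle_ineq2)
      also have "norm (y0 - x) \<le> A * (C + eps)"
      proof -
        have "norm (y0 - x)/(C + eps) \<le> A" using y0(2) low[rule_format, of y0] A_def by linarith
        then show ?thesis using assms(2) eps0 by (simp add: divide_le_eq mult.commute)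
      qed
      also have "A * (C + eps) = A * C + A * eps" by (simp add: algebra_simps)
      also have "A * eps \<le> e"
      proof -
        have "A * eps = e * (A / (A + 1))" unfolding eps_def by simp
        also have "\<dots> \<le> e * 1" using e A0 by (intro mult_left_mono) auto
        finally show ?thesis by simp
      qed
      finally show "norm x - R \<le> A * C + e" by simp
    qed
    have "(norm x - R) / C \<le> A" using main assms(2) by (simp add: divide_le_eq)
    then show "1 / C * norm x + (L - R / C) \<le> V x"
      unfolding A_def by (simp add: diff_divide_distrib)
  qed
qed

end
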